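(* Let $k$ be a positive integer and $n\ge3$, and let $C_n+K_1$ be the wheel graph. Then (i) $O_{R,k}(C_3+K_1)=O_R(C_3+K_1)=\mathcal{B}$; (ii) if $n\in\{4,5,6,7\}$ or $n\ge8$ is even, then $O_{R,k}(C_n+K_1)=O_R(C_n+K_1)=\mathcal{M}$; (iii) if $n\ge9$ is odd, then $O_{R,k}(C_n+K_1)=O_R(C_n+K_1)\in\{\mathcal{M},\mathcal{N}\}$ (Maker has a winning strategy in the game where he moves first).
   Context: $C_n+K_1$ is the join of the cycle $C_n$ with a single vertex $v$ (i.e., $v$ adjacent to every vertex of $C_n$). $d$ is the shortest-path distance and $d_k(x,y)=\min\{d(x,y),k+1\}$. A set $S$ is a distance-$k$ resolving set if for all distinct $x,y$ some $z\in S$ has $d_k(x,z)\ne d_k(y,z)$, and a resolving set if this holds with $d$. In the Maker-Breaker distance-$k$ resolving game, Maker and Breaker alternately select a not-yet-chosen vertex; Maker wins if his selected vertices form a distance-$k$ resolving set, Breaker wins otherwise. $O_{R,k}(G)=\mathcal{M}$ if Maker has a winning strategy whether he moves first or second, $\mathcal{B}$ if Breaker has a winning strategy whether she moves first or second, $\mathcal{N}$ if the first player has a winning strategy. $O_R(G)$ is the analogous outcome for the game in which Maker must form a resolving set. *)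

theory Defs
  imports Main
begin

fun reach :: "('a \<Rightarrow> 'a \<Rightarrow> bool) \<Rightarrow> nat \<Rightarrow> 'a \<Rightarrow> 'a \<Rightarrow> bool" where
  "reach adj 0 x y = (x = y)"
| "reach adj (Suc m) x y = (\<exists>z. adj x z \<and> reach adj m z y)"

text \<open>Shortest-path distance (the graphs used below are connected).\<close>
definition gdist :: "('a \<Rightarrow> 'a \<Rightarrow> bool) \<Rightarrow> 'a \<Rightarrow> 'a \<Rightarrow> nat" where
  "gdist adj x y = (LEAST m. reach adj m x y)"

definition gdist_k :: "nat \<Rightarrow> ('a \<Rightarrow> 'a \<Rightarrow> bool) \<Rightarrow> 'a \<Rightarrow> 'a \<Rightarrow> nat" where
  "gdist_k k adj x y = min (gdist adj x y) (k + 1)"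

definition resolving :: "('a \<Rightarrow> 'a \<Rightarrow> bool) \<Rightarrow> 'a set \<Rightarrow> 'a set \<Rightarrow> bool" where
  "resolving adj V S \<longleftrightarrow>
     (\<forall>x\<in>V. \<forall>y\<in>V. x \<noteq> y \<longrightarrow> (\<exists>z\<in>S. gdist adj x z \<noteq> gdist adj y z))"

definition k_resolving :: "nat \<Rightarrow> ('a \<Rightarrow> 'a \<Rightarrow> bool) \<Rightarrow> 'a set \<Rightarrow> 'a set \<Rightarrow> bool" where
  "k_resolving k adj V S \<longleftrightarrow>
     (\<forall>x\<in>V. \<forall>y\<in>V. x \<noteq> y \<longrightarrow> (\<exists>z\<in>S. gdist_k k adj x z \<noteq> gdist_k k adj y z))"

text \<open>Vertices 0..n-1 form the cycle C_n (i adjacent to i+1 mod n), vertex n is the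
universal vertex v.\<close>
definition wheel_V :: "nat \<Rightarrow> nat set" where
  "wheel_V n = {0..n}"

definition wheel_adj :: "nat \<Rightarrow> nat \<Rightarrow> nat \<Rightarrow> bool" where
  "wheel_adj n x y \<longleftrightarrow> x \<le> n \<and> y \<le> n \<and> x \<noteq> y \<and>
     (x = n \<or> y = n \<or> (x + 1) mod n = y \<or> (y + 1) mod n = x)"

text \<open>maker_wins V W M B t: from the position where Maker holds M, Breaker holds B,
and it is Maker's turn iff t, Maker has a winning strategy.\<close>
inductive maker_wins :: "'a set \<Rightarrow> ('a set \<Rightarrow> bool) \<Rightarrow> 'a set \<Rightarrow> 'a set \<Rightarrow> bool \<Rightarrow> bool"
  for V W where
  finish: "M \<union> B = V \<Longrightarrow> W M \<Longrightarrow> maker_wins V W M B t"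
| maker_move: "v \<in> V - (M \<union> B) \<Longrightarrow> maker_wins V W (insert v M) B False
      \<Longrightarrow> maker_wins V W M B True"
| breaker_move: "M \<union> B \<noteq> V \<Longrightarrow> (\<forall>v \<in> V - (M \<union> B). maker_wins V W M (insert v B) True)
      \<Longrightarrow> maker_wins V W M B False"

datatype outcome = Maker_outcome | Breaker_outcome | Next_outcome | Previous_outcome

text \<open>Outcome: M if Maker wins both as first and second player; B if Breaker wins
both (i.e. Maker wins in neither, the game being finite and determined); N if the
first player wins; P (second player wins) for completeness.\<close>
definition game_outcome :: "'a set \<Rightarrow> ('a set \<Rightarrow> bool) \<Rightarrow> outcome" where
  "game_outcome V W =
    (let mf = maker_wins V W {} {} True; ms = maker_wins V W {} {} False in
     if mf \<and> ms then Maker_outcome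
     else if \<not> mf \<and> \<not> ms then Breaker_outcome
     else if mf \<and> \<not> ms then Next_outcome
     else Previous_outcome)"

definition O_R :: "('a \<Rightarrow> 'a \<Rightarrow> bool) \<Rightarrow> 'a set \<Rightarrow> outcome" where
  "O_R adj V = game_outcome V (resolving adj V)"

definition O_Rk :: "nat \<Rightarrow> ('a \<Rightarrow> 'a \<Rightarrow> bool) \<Rightarrow> 'a set \<Rightarrow> outcome" where
  "O_Rk k adj V = game_outcome V (k_resolving k adj V)"

end

theory Submission
  imports Defs
begin



lemma reach_Suc0: "reach adj (Suc 0) x y = adj x y" by simp

lemma gdist_wheel:
  assumes "n \<ge> 3" "x \<le> n" "y \<le> n"
  shows "gdist (wheel_adj n) x y = (if x = y then 0 else if wheel_adj n x y then 1 else 2)"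
proof (cases "x = y")
  case True
  then show ?thesis unfolding gdist_def by (simp add: Least_eq_0)
next
  case ne: False
  show ?thesis
  proof (cases "wheel_adj n x y")
    case True
    have "(LEAST m. reach (wheel_adj n) m x y) = 1"
    proof (rule Least_equality)
      show "reach (wheel_adj n) 1 x y" using True by simp
      fix m assume "reach (wheel_adj n) m x y"
      then show "1 \<le> m" using ne by (cases m) auto
    qed
    then show ?thesis using ne True unfolding gdist_def by simp
  next
    case False
    have xn: "x \<noteq> n" using False ne assms unfolding wheel_adj_def by auto
    have yn: "y \<noteq> n" using False ne assms unfolding wheel_adj_def by auto
    have "(LEAST m. reach (wheel_adj n) m x y) = 2"
    proof (rule Least_equality)
      have "reach (wheel_adj n) (Suc (Suc 0)) x y"
        using xn yn assms by (auto simp: wheel_adj_def intro!: exI[of _ n])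
      then show "reach (wheel_adj n) 2 x y" by (simp add: numeral_2_eq_2)
      fix m assume r: "reach (wheel_adj n) m x y"
      show "2 \<le> m"
      proof (rule ccontr)
        assume "\<not> 2 \<le> m"
        then have "m = 0 \<or> m = 1" by auto
        then show False using r ne False by auto
      qed
    qed
    then show ?thesis using ne False unfolding gdist_def by simp
  qed
qed

definition wd :: "nat \<Rightarrow> nat \<Rightarrow> nat \<Rightarrow> nat" where
  "wd n x z = (if x = z then 0 else if wheel_adj n x z then 1 else 2)"

lemma res_iff:
  assumes "n \<ge> 3" "S \<subseteq> wheel_V n"
  shows "resolving (wheel_adj n) (wheel_V n) S \<longleftrightarrow>
    (\<forall>x\<le>n. \<forall>y\<le>n. x \<noteq> y \<longrightarrow> (\<exists>z\<in>S. wd n x z \<noteq> wd n y z))"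
proof -
  have "\<And>x z. x \<le> n \<Longrightarrow> z \<in> S \<Longrightarrow> gdist (wheel_adj n) x z = wd n x z"
    using assms gdist_wheel unfolding wd_def wheel_V_def by auto
  then have "\<And>x y. x \<le> n \<Longrightarrow> y \<le> n \<Longrightarrow> (\<exists>z\<in>S. gdist (wheel_adj n) x z \<noteq> gdist (wheel_adj n) y z) = (\<exists>z\<in>S. wd n x z \<noteq> wd n y z)"
    by (metis (no_types, lifting))
  then show ?thesis unfolding resolving_def wheel_V_def by auto
qed

lemma kres_iff:
  assumes "n \<ge> 3" "k \<ge> 1" "S \<subseteq> wheel_V n"
  shows "k_resolving k (wheel_adj n) (wheel_V n) S \<longleftrightarrow> resolving (wheel_adj n) (wheel_V n) S"
proof -
  have "\<And>x z. x \<le> n \<Longrightarrow> z \<in> S \<Longrightarrow> gdist_k k (wheel_adj n) x z = gdist (wheel_adj n) x z"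
    using assms gdist_wheel unfolding gdist_k_def wheel_V_def by auto
  then show ?thesis unfolding resolving_def k_resolving_def wheel_V_def by auto
qed

lemma mw_cong:
  assumes "maker_wins V W1 M B t" "\<forall>S\<subseteq>V. W1 S \<longrightarrow> W2 S"
  shows "maker_wins V W2 M B t"
  using assms
proof (induction rule: maker_wins.induct)
  case (finish M B t)
  then show ?case by (intro maker_wins.finish) auto
next
  case (maker_move v M B)
  then show ?case by (intro maker_wins.maker_move[of v]) auto
next
  case (breaker_move M B)
  then show ?case by (intro maker_wins.breaker_move) auto
qed

lemma outcome_cong:
  assumes "\<forall>S\<subseteq>V. W1 S \<longleftrightarrow> W2 S"
  shows "game_outcome V W1 = game_outcome V W2"
proof -
  have "maker_wins V W1 M B t = maker_wins V W2 M B t" for M B t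
    using mw_cong assms by metis
  then show ?thesis unfolding game_outcome_def by simp
qed




lemma pairing:
  assumes "finite V" "D \<subseteq> V" "\<forall>x\<in>D. p x \<in> D \<and> p x \<noteq> x \<and> p (p x) = x"
   "M \<union> B \<subseteq> V" "\<forall>x\<in>D. x \<in> B \<longrightarrow> p x \<in> M"
   "\<forall>M'. M \<subseteq> M' \<longrightarrow> M' \<subseteq> V \<longrightarrow> (\<forall>x\<in>D. x \<in> M' \<or> p x \<in> M') \<longrightarrow> W M'"
  shows "maker_wins V W M B False"
  using assms(4-6)
proof (induction "card (V - (M \<union> B))" arbitrary: M B rule: less_induct)
  case less
  note D = assms(2,3)
  show ?case
  proof (cases "M \<union> B = V")
    case True
    have "W M"
      using less.prems True D by (intro less.prems(3)[rule_format]) auto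
    then show ?thesis using True by (rule maker_wins.finish[rotated])
  next
    case notfull: False
    show ?thesis
    proof (rule maker_wins.breaker_move[OF notfull], intro ballI)
      fix v assume v: "v \<in> V - (M \<union> B)"
      define B' where "B' = insert v B"
      have pvB: "v \<in> D \<Longrightarrow> p v \<notin> B"
        using less.prems(2) D v by fastforce
      show "maker_wins V W M (insert v B) True"
      proof (cases "M \<union> B' = V")
        case True
        have MV: "M \<subseteq> V" using less.prems by auto
        have hit: "\<forall>x\<in>D. x \<in> M \<or> p x \<in> M"
          proof
            fix x assume x: "x \<in> D"
            show "x \<in> M \<or> p x \<in> M"
            proof (cases "x = v")
              case True
              then have "p v \<in> V" "p v \<noteq> v" using x D by auto
              then show ?thesis using True pvB x \<open>M \<union> B' = V\<close> unfolding B'_def by auto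
            next
              case False
              then show ?thesis using x D less.prems(2) \<open>M \<union> B' = V\<close> unfolding B'_def by auto
            qed
          qed
        have "W M" using less.prems(3) MV hit by blast
        then show ?thesis using True unfolding B'_def by (intro maker_wins.finish) auto
      next
        case nf2: False
        have ex: "\<exists>u. u \<in> V - (M \<union> B')" using nf2 less.prems(1) v unfolding B'_def by auto
        define u where "u = (if v \<in> D \<and> p v \<notin> M then p v else (SOME u. u \<in> V - (M \<union> B')))"
        have u: "u \<in> V - (M \<union> B')"
        proof (cases "v \<in> D \<and> p v \<notin> M")
          case True
          then show ?thesis unfolding u_def B'_def using pvB D by auto
        next
          case False
          then show ?thesis unfolding u_def using someI_ex[OF ex] by auto
        qed
        have "maker_wins V W (insert u M) B' False"
        proof (rule less.hyps)
          have "V - (insert u M \<union> B') \<subset> V - (M \<union> B)" using u v unfolding B'_def by auto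
          then show "card (V - (insert u M \<union> B')) < card (V - (M \<union> B))"
            using assms(1) by (meson finite_Diff psubset_card_mono)
          show "insert u M \<union> B' \<subseteq> V" using u v less.prems(1) unfolding B'_def by auto
          show "\<forall>x\<in>D. x \<in> B' \<longrightarrow> p x \<in> insert u M"
            using less.prems(2) unfolding B'_def u_def by auto
          show "\<forall>M'. insert u M \<subseteq> M' \<longrightarrow> M' \<subseteq> V \<longrightarrow> (\<forall>x\<in>D. x \<in> M' \<or> p x \<in> M') \<longrightarrow> W M'"
            using less.prems(3) by auto
        qed
        then show ?thesis using u unfolding B'_def
          by (intro maker_wins.maker_move[of u]) auto
      qed
    qed
  qed
qed

lemma mw_card:
  assumes "maker_wins V W M B t" "finite V" "M \<union> B \<subseteq> V"
  shows "\<exists>M'. W M' \<and> M \<subseteq> M' \<and> M' \<subseteq> V \<and>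
     card M' \<le> card M + (if t then (card (V - (M \<union> B)) + 1) div 2 else card (V - (M \<union> B)) div 2)"
  using assms
proof (induction rule: maker_wins.induct)
  case (finish M B t)
  then show ?case by (intro exI[of _ M]) auto
next
  case (maker_move v M B)
  then obtain M' where M': "W M'" "insert v M \<subseteq> M'" "M' \<subseteq> V"
    "card M' \<le> card (insert v M) + card (V - (insert v M \<union> B)) div 2" by auto
  have fM: "finite M" using maker_move.prems finite_subset by auto
  have c1: "card (V - (insert v M \<union> B)) = card (V - (M \<union> B)) - 1"
  proof -
    have "V - (insert v M \<union> B) = (V - (M \<union> B)) - {v}" by auto
    then show ?thesis using maker_move.hyps(1) by (simp add: card_Diff_singleton)
  qed
  have c2: "card (V - (M \<union> B)) \<ge> 1"
    using maker_move.hyps(1) maker_move.prems(1) by (metis One_nat_def Suc_leI card_gt_0_iff empty_iff finite_Diff)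
  have "card (insert v M) \<le> card M + 1" using fM by (simp add: card_insert_if)
  then show ?case using M' c1 c2 by (intro exI[of _ M']) auto
next
  case (breaker_move M B)
  from breaker_move.hyps(1) breaker_move.prems(2) obtain v where v: "v \<in> V - (M \<union> B)" by auto
  have "\<exists>M'. W M' \<and> M \<subseteq> M' \<and> M' \<subseteq> V \<and> card M' \<le> card M + (card (V - (M \<union> insert v B)) + 1) div 2"
    using breaker_move.IH v breaker_move.prems by auto
  then obtain M' where M': "W M'" "M \<subseteq> M'" "M' \<subseteq> V"
    "card M' \<le> card M + (card (V - (M \<union> insert v B)) + 1) div 2" by blast
  have c1: "card (V - (M \<union> insert v B)) = card (V - (M \<union> B)) - 1"
  proof -
    have "V - (M \<union> insert v B) = (V - (M \<union> B)) - {v}" by auto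
    then show ?thesis using v by (simp add: card_Diff_singleton)
  qed
  have c2: "card (V - (M \<union> B)) \<ge> 1"
    using v breaker_move.prems(1) by (metis One_nat_def Suc_leI card_gt_0_iff empty_iff finite_Diff)
  show ?case using M' c1 c2 by (intro exI[of _ M']) auto
qed




lemma suc_mod: "a < n \<Longrightarrow> (a + 1) mod (n::nat) = (if a + 1 = n then 0 else a + 1)"
  by auto

lemma adj_cyc:
  assumes "a < n" "b < n"
  shows "wheel_adj n a b \<longleftrightarrow> a \<noteq> b \<and> (b = a + 1 \<or> a = b + 1 \<or> (a + 1 = n \<and> b = 0) \<or> (b + 1 = n \<and> a = 0))"
  using assms suc_mod[OF assms(1)] suc_mod[OF assms(2)] unfolding wheel_adj_def by auto

lemma adj_center: "a < n \<Longrightarrow> wheel_adj n a n \<and> wheel_adj n n a"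
  unfolding wheel_adj_def by auto

definition pp :: "nat \<Rightarrow> nat" where "pp x = (if even x then x + 1 else x - 1)"

lemma three_adj:
  assumes "n \<ge> 6" "y < n" "r0 \<le> 1" "2 \<le> r1" "r1 \<le> 3" "4 \<le> r2" "r2 \<le> 5"
  shows "\<not> (wheel_adj n y r0 \<and> wheel_adj n y r1 \<and> wheel_adj n y r2)"
  using assms by (simp add: adj_cyc) arith

lemma four_cycle:
  assumes "n \<ge> 5" "x < n" "y < n" "pp x < n" "pp y < n" "x \<noteq> y" "pp x \<noteq> y" "pp y \<noteq> x"
  shows "\<not> (wheel_adj n y (pp x) \<and> wheel_adj n x (pp y))"
proof -
  have px: "pp x = x + 1 \<or> (x \<ge> 1 \<and> pp x = x - 1)" unfolding pp_def by (auto dest: odd_pos)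
  have py: "pp y = y + 1 \<or> (y \<ge> 1 \<and> pp y = y - 1)" unfolding pp_def by (auto dest: odd_pos)
  have "pp x \<noteq> pp y" unfolding pp_def using \<open>x \<noteq> y\<close> by (auto split: if_splits) presburger+
  then show ?thesis using assms px py by (simp add: adj_cyc) arith
qed




lemma pp_props: assumes "x < 2 * m" shows "pp x < 2 * m \<and> pp x \<noteq> x \<and> pp (pp x) = x"
proof -
  obtain i where "x = 2*i \<or> x = 2*i+1" by (metis oddE evenE)
  then show ?thesis
  proof
    assume x: "x = 2*i"
    then have "pp x = 2*i+1" unfolding pp_def by simp
    moreover have "pp (2*i+1) = 2*i" unfolding pp_def by simp
    ultimately show ?thesis using assms x by auto
  next
    assume x: "x = 2*i+1"
    then have "pp x = 2*i" unfolding pp_def by simp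
    moreover have "pp (2*i) = 2*i+1" unfolding pp_def by simp
    ultimately show ?thesis using assms x by auto
  qed
qed

lemma pp_simps: "pp 0 = 1" "pp 2 = 3" "pp 4 = 5" unfolding pp_def by auto

lemma wd_self: "wd n x x = 0" unfolding wd_def by simp

lemma wd_ne0: "x \<noteq> z \<Longrightarrow> wd n x z \<noteq> 0" unfolding wd_def by simp

lemma res_general:
  assumes n6: "n \<ge> 6" and m: "2 * m \<le> n" "m \<ge> 3" and SV: "S \<subseteq> wheel_V n"
    and hit: "\<forall>x<2*m. x \<in> S \<or> pp x \<in> S"
    and shape: "2 * m = n \<or> (2 * m + 1 = n \<and> n - 1 \<in> S)"
  shows "resolving (wheel_adj n) (wheel_V n) S"
proof -
  have key: "\<exists>z\<in>S. wd n x z \<noteq> wd n y z" if xy: "x \<le> n" "y \<le> n" "x \<noteq> y"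
      and xS: "x \<notin> S" and yS: "y \<notin> S" and yn: "y \<noteq> n" for x y
  proof (cases "x = n")
    case True
    have yl: "y < n" using yn xy by auto
    obtain r0 where r0: "r0 \<in> S" "r0 \<le> 1" using hit[rule_format, of 0] m pp_simps by force
    obtain r1 where r1: "r1 \<in> S" "2 \<le> r1" "r1 \<le> 3" using hit[rule_format, of 2] m pp_simps by force
    obtain r2 where r2: "r2 \<in> S" "4 \<le> r2" "r2 \<le> 5" using hit[rule_format, of 4] m pp_simps by force
    have rl: "r0 < n" "r1 < n" "r2 < n" using r0 r1 r2 n6 by auto
    have "\<exists>r\<in>S. r < n \<and> \<not> wheel_adj n y r"
      using three_adj[OF n6 yl r0(2) r1(2,3) r2(2,3)] r0(1) r1(1) r2(1) rl by blast
    then obtain r where r: "r \<in> S" "r < n" "\<not> wheel_adj n y r" by blast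
    have "r \<noteq> y" using r yS by auto
    then have "wd n y r = 2" using r unfolding wd_def by simp
    moreover have "wd n x r = 1" using True r adj_center[of r n] unfolding wd_def by auto
    ultimately show ?thesis using r by force
  next
    case False
    have xl: "x < n" "y < n" using False xy yn by auto
    have x2: "x < 2*m" "y < 2*m" using shape xl xS yS by (auto simp: less_Suc_eq)
    have px: "pp x \<in> S" "pp y \<in> S" using hit x2 xS yS by auto
    have pl: "pp x < n" "pp y < n" using pp_props[OF x2(1)] pp_props[OF x2(2)] m by auto
    have ne: "pp x \<noteq> y" "pp y \<noteq> x" using px xS yS by auto
    have ax: "wheel_adj n x (pp x)" "wheel_adj n y (pp y)"
      using pp_props[OF x2(1)] pp_props[OF x2(2)] xl pl unfolding pp_def
      by (auto simp: adj_cyc split: if_splits)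
    have nc: "\<not> (wheel_adj n y (pp x) \<and> wheel_adj n x (pp y))"
      using four_cycle[of n x y] n6 xl pl xy ne by auto
    show ?thesis
    proof (cases "wheel_adj n y (pp x)")
      case False
      then have "wd n y (pp x) = 2" "wd n x (pp x) = 1"
        using ne ax pp_props[OF x2(1)] unfolding wd_def by auto
      then show ?thesis using px by force
    next
      case True
      then have "\<not> wheel_adj n x (pp y)" using nc by auto
      then have "wd n x (pp y) = 2" "wd n y (pp y) = 1"
        using ne ax pp_props[OF x2(2)] unfolding wd_def by auto
      then show ?thesis using px by force
    qed
  qed
  have "\<exists>z\<in>S. wd n x z \<noteq> wd n y z" if xy: "x \<le> n" "y \<le> n" "x \<noteq> y" for x y
  proof (cases "x \<in> S \<or> y \<in> S")
    case True
    then show ?thesis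
    proof
      assume "x \<in> S" then show ?thesis using xy wd_self[of n x] wd_ne0[of y x n] by metis
    next
      assume "y \<in> S" then show ?thesis using xy wd_self[of n y] wd_ne0[of x y n] by metis
    qed
  next
    case False
    show ?thesis
    proof (cases "y = n")
      case False
      then show ?thesis using key xy \<open>\<not> (x \<in> S \<or> y \<in> S)\<close> by blast
    next
      case True
      then have "x \<noteq> n" using xy by auto
      then show ?thesis using key[of y x] xy \<open>\<not> (x \<in> S \<or> y \<in> S)\<close> by metis
    qed
  qed
  then show ?thesis using res_iff[OF _ SV] n6 by auto
qed




fun pl :: "(nat \<times> nat) list \<Rightarrow> nat \<Rightarrow> nat" where
  "pl [] x = x"
| "pl ((a,b)#ps) x = (if x = a then b else if x = b then a else pl ps x)"

definition pd :: "(nat \<times> nat) list \<Rightarrow> nat set" where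
  "pd ps = fst ` set ps \<union> snd ` set ps"

fun choices :: "(nat \<times> nat) list \<Rightarrow> nat list list" where
  "choices [] = [[]]"
| "choices ((a,b)#ps) = map ((#) a) (choices ps) @ map ((#) b) (choices ps)"

definition chk :: "nat \<Rightarrow> nat set \<Rightarrow> bool" where
  "chk n S = (\<forall>x\<in>set [0..<Suc n]. \<forall>y\<in>set [0..<Suc n]. x \<noteq> y \<longrightarrow> (\<exists>z\<in>S. wd n x z \<noteq> wd n y z))"

definition cond :: "nat \<Rightarrow> nat set \<Rightarrow> nat set \<Rightarrow> (nat \<times> nat) list \<Rightarrow> bool" where
  "cond n M0 B0 ps = ((\<forall>x\<in>pd ps. pl ps x \<in> pd ps \<and> pl ps x \<noteq> x \<and> pl ps (pl ps x) = x)
     \<and> (\<forall>(a,b)\<in>set ps. pl ps a = b) \<and> pd ps \<subseteq> set [0..<Suc n] \<and> M0 \<subseteq> set [0..<Suc n]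
     \<and> B0 \<subseteq> set [0..<Suc n] \<and> pd ps \<inter> B0 = {} \<and> (\<forall>C\<in>set (choices ps). chk n (M0 \<union> set C)))"

lemma hit_choice: "\<forall>(a,b)\<in>set ps. a \<in> M' \<or> b \<in> M' \<Longrightarrow> \<exists>C\<in>set (choices ps). set C \<subseteq> M'"
proof (induction ps)
  case Nil
  then show ?case by simp
next
  case (Cons ab ps)
  obtain a b where ab: "ab = (a,b)" by force
  from Cons obtain C where C: "C \<in> set (choices ps)" "set C \<subseteq> M'" by auto
  have "a \<in> M' \<or> b \<in> M'" using Cons.prems ab by auto
  then show ?case
  proof
    assume "a \<in> M'" then show ?thesis using C ab by (intro bexI[of _ "a # C"]) auto
  next
    assume "b \<in> M'" then show ?thesis using C ab by (intro bexI[of _ "b # C"]) auto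
  qed
qed

lemma res_mono: "resolving adj V S0 \<Longrightarrow> S0 \<subseteq> S \<Longrightarrow> resolving adj V S"
  unfolding resolving_def by blast

lemma wV: "wheel_V n = set [0..<Suc n]" unfolding wheel_V_def by auto

lemma chk_iff: "chk n S \<longleftrightarrow> (\<forall>x\<le>n. \<forall>y\<le>n. x \<noteq> y \<longrightarrow> (\<exists>z\<in>S. wd n x z \<noteq> wd n y z))"
proof -
  have e: "\<And>x. x \<in> set [0..<Suc n] \<longleftrightarrow> x \<le> n" by auto
  show ?thesis unfolding chk_def Ball_def by (simp only: e)
qed

lemma chk_res: "n \<ge> 3 \<Longrightarrow> S \<subseteq> wheel_V n \<Longrightarrow> chk n S \<Longrightarrow> resolving (wheel_adj n) (wheel_V n) S"
  using res_iff[of n S] chk_iff[of n S] by blast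

lemma win_pairs:
  assumes "n \<ge> 3" "cond n M0 B0 ps"
  shows "maker_wins (wheel_V n) (resolving (wheel_adj n) (wheel_V n)) M0 B0 False"
proof -
  note c = assms(2)[unfolded cond_def wV[symmetric]]
  note c1 = c[THEN conjunct1]
  note c2 = c[THEN conjunct2, THEN conjunct1]
  note c3 = c[THEN conjunct2, THEN conjunct2, THEN conjunct1]
  note c4 = c[THEN conjunct2, THEN conjunct2, THEN conjunct2, THEN conjunct1]
  note c5 = c[THEN conjunct2, THEN conjunct2, THEN conjunct2, THEN conjunct2, THEN conjunct1]
  note c6 = c[THEN conjunct2, THEN conjunct2, THEN conjunct2, THEN conjunct2, THEN conjunct2, THEN conjunct1]
  note c7 = c[THEN conjunct2, THEN conjunct2, THEN conjunct2, THEN conjunct2, THEN conjunct2, THEN conjunct2]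
  show ?thesis
  proof (rule pairing[where D = "pd ps" and p = "pl ps"])
    show "finite (wheel_V n)" unfolding wheel_V_def by simp
    show "pd ps \<subseteq> wheel_V n" by (rule c3)
    show "\<forall>x\<in>pd ps. pl ps x \<in> pd ps \<and> pl ps x \<noteq> x \<and> pl ps (pl ps x) = x" by (rule c1)
    show "M0 \<union> B0 \<subseteq> wheel_V n" using c4 c5 by (rule Un_least)
    show "\<forall>x\<in>pd ps. x \<in> B0 \<longrightarrow> pl ps x \<in> M0" using c6 by blast
    show "\<forall>M'. M0 \<subseteq> M' \<longrightarrow> M' \<subseteq> wheel_V n \<longrightarrow> (\<forall>x\<in>pd ps. x \<in> M' \<or> pl ps x \<in> M') \<longrightarrow>
        resolving (wheel_adj n) (wheel_V n) M'"
    proof (intro allI impI)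
      fix M' assume M': "M0 \<subseteq> M'" "M' \<subseteq> wheel_V n" "\<forall>x\<in>pd ps. x \<in> M' \<or> pl ps x \<in> M'"
      have ab2: "a \<in> M' \<or> b \<in> M'" if ab: "(a,b) \<in> set ps" for a b
      proof -
        have "a \<in> pd ps" using ab unfolding pd_def by force
        then have "a \<in> M' \<or> pl ps a \<in> M'" using M'(3) by blast
        moreover have "pl ps a = b" using c2 ab by fastforce
        ultimately show ?thesis by simp
      qed
      have "\<forall>(a,b)\<in>set ps. a \<in> M' \<or> b \<in> M'" using ab2 by blast
      then obtain C where C: "C \<in> set (choices ps)" "set C \<subseteq> M'" using hit_choice by blast
      have "chk n (M0 \<union> set C)" using c7 C(1) by blast
      moreover have "M0 \<union> set C \<subseteq> wheel_V n" using M' C by blast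
      ultimately have "resolving (wheel_adj n) (wheel_V n) (M0 \<union> set C)"
        using chk_res assms(1) by blast
      moreover have "M0 \<union> set C \<subseteq> M'" using M' C by blast
      ultimately show "resolving (wheel_adj n) (wheel_V n) M'" by (rule res_mono)
    qed
  qed
qed




lemma c4: "cond 4 {} {} [(0,2),(1,3)] \<and> cond 4 {4} {} [(0,2),(1,3)]" by code_simp
lemma c5: "cond 5 {} {} [(0,1),(2,3),(4,5)] \<and> cond 5 {0} {} [(0,1),(2,3),(4,5)]" by code_simp

fun resp7 :: "nat \<Rightarrow> nat" where
  "resp7 v = (if v \<in> {0,2,5} then 1 else 0)"

fun ps7 :: "nat \<Rightarrow> (nat \<times> nat) list" where
  "ps7 v = (if v = 0 then [(2,3),(4,6),(5,7)] else if v = 1 then [(2,4),(3,7),(5,6)]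
     else if v = 2 then [(0,6),(3,5),(4,7)] else if v = 3 then [(1,7),(2,4),(5,6)]
     else if v = 4 then [(1,2),(3,5),(6,7)] else if v = 5 then [(0,7),(2,3),(4,6)]
     else if v = 6 then [(1,2),(3,5),(4,7)] else [(1,2),(3,4),(5,6)])"

lemma c7: "\<forall>v\<in>set [0..<8]. resp7 v \<noteq> v \<and> resp7 v \<le> 7 \<and> cond 7 {resp7 v} {v} (ps7 v)" by code_simp




lemma adj3: "x \<le> 3 \<Longrightarrow> z \<le> 3 \<Longrightarrow> x \<noteq> z \<Longrightarrow> wheel_adj 3 x z"
proof -
  assume a: "x \<le> 3" "z \<le> 3" "x \<noteq> z"
  then have "x \<in> {0,1,2,3}" "z \<in> {0,1,2,3}" by auto
  then show ?thesis using a unfolding wheel_adj_def by auto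
qed

lemma res3:
  assumes "resolving (wheel_adj 3) (wheel_V 3) S" "S \<subseteq> wheel_V 3"
  shows "card S \<ge> 3"
proof -
  have r: "\<forall>x\<le>3. \<forall>y\<le>3. x \<noteq> y \<longrightarrow> (\<exists>z\<in>S. wd 3 x z \<noteq> wd 3 y z)"
    using res_iff[of 3 S] assms by auto
  have one: "x \<in> S \<or> y \<in> S" if "x \<le> 3" "y \<le> 3" "x \<noteq> y" for x y
  proof (rule ccontr)
    assume "\<not> (x \<in> S \<or> y \<in> S)"
    then have "\<forall>z\<in>S. wd 3 x z = wd 3 y z"
    proof (intro ballI)
      fix z assume z: "z \<in> S" and ns: "\<not> (x \<in> S \<or> y \<in> S)"
      have "z \<le> 3" using z assms(2) unfolding wheel_V_def by auto
      moreover have "z \<noteq> x" "z \<noteq> y" using z ns by auto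
      ultimately have "wheel_adj 3 x z" "wheel_adj 3 y z" using adj3 that by auto
      then show "wd 3 x z = wd 3 y z" using \<open>z \<noteq> x\<close> \<open>z \<noteq> y\<close> unfolding wd_def by auto
    qed
    then show False using r that by blast
  qed
  have fin: "finite S" using assms(2) finite_subset unfolding wheel_V_def by blast
  have "\<exists>a b c. {a,b,c} \<subseteq> S \<and> a \<noteq> b \<and> a \<noteq> c \<and> b \<noteq> c"
  proof (cases "0 \<in> S")
    case False
    then have "1 \<in> S" "2 \<in> S" "3 \<in> S" using one[of 0 1] one[of 0 2] one[of 0 3] by auto
    then show ?thesis by (intro exI[of _ 1] exI[of _ 2] exI[of _ 3]) auto
  next
    case z: True
    show ?thesis
    proof (cases "1 \<in> S")
      case False
      then have "2 \<in> S" "3 \<in> S" using one[of 1 2] one[of 1 3] by auto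
      then show ?thesis using z by (intro exI[of _ 0] exI[of _ 2] exI[of _ 3]) auto
    next
      case o: True
      show ?thesis
      proof (cases "2 \<in> S")
        case False
        then have "3 \<in> S" using one[of 2 3] by auto
        then show ?thesis using z o by (intro exI[of _ 0] exI[of _ 1] exI[of _ 3]) auto
      next
        case True
        then show ?thesis using z o by (intro exI[of _ 0] exI[of _ 1] exI[of _ 2]) auto
      qed
    qed
  qed
  then obtain a b c where abc: "{a,b,c} \<subseteq> S" "a \<noteq> b" "a \<noteq> c" "b \<noteq> c" by blast
  have "card {a,b,c} = 3" using abc by auto
  then show ?thesis using card_mono[OF fin abc(1)] by auto
qed

lemma lose3: "\<not> maker_wins (wheel_V 3) (resolving (wheel_adj 3) (wheel_V 3)) {} {} t"
proof
  assume mw: "maker_wins (wheel_V 3) (resolving (wheel_adj 3) (wheel_V 3)) {} {} t"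
  have fin: "finite (wheel_V 3)" unfolding wheel_V_def by simp
  have sub: "{} \<union> {} \<subseteq> wheel_V 3" by simp
  from mw_card[OF mw fin sub] obtain M' where M': "resolving (wheel_adj 3) (wheel_V 3) M'" "{} \<subseteq> M'" "M' \<subseteq> wheel_V 3"
    "card M' \<le> card ({}::nat set) + (if t then (card (wheel_V 3 - ({} \<union> {})) + 1) div 2 else card (wheel_V 3 - ({} \<union> {})) div 2)"
    by blast
  have e: "card (wheel_V 3 - ({} \<union> {})) = 4" unfolding wheel_V_def by simp
  have "card M' \<le> 2" using M'(4) unfolding e by (simp split: if_splits)
  then show False using res3[OF M'(1,3)] by auto
qed

lemma even_win:
  assumes "n \<ge> 6" "even n" "M0 \<subseteq> wheel_V n"
  shows "maker_wins (wheel_V n) (resolving (wheel_adj n) (wheel_V n)) M0 {} False"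
proof (rule pairing[where D = "{0..<n}" and p = pp])
  obtain m where m: "n = 2 * m" using assms(2) by blast
  show "finite (wheel_V n)" "{0..<n} \<subseteq> wheel_V n" "M0 \<union> {} \<subseteq> wheel_V n"
    "\<forall>x\<in>{0..<n}. x \<in> {} \<longrightarrow> pp x \<in> M0" using assms unfolding wheel_V_def by auto
  show "\<forall>x\<in>{0..<n}. pp x \<in> {0..<n} \<and> pp x \<noteq> x \<and> pp (pp x) = x" using pp_props m by auto
  show "\<forall>M'. M0 \<subseteq> M' \<longrightarrow> M' \<subseteq> wheel_V n \<longrightarrow> (\<forall>x\<in>{0..<n}. x \<in> M' \<or> pp x \<in> M') \<longrightarrow>
      resolving (wheel_adj n) (wheel_V n) M'"
    using res_general[of n m] m assms(1) by auto
qed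

lemma odd_win:
  assumes "n \<ge> 7" "odd n"
  shows "maker_wins (wheel_V n) (resolving (wheel_adj n) (wheel_V n)) {n-1} {} False"
proof (rule pairing[where D = "{0..<n-1}" and p = pp])
  obtain m where m: "n = 2 * m + 1" using assms(2) by (metis oddE)
  show "finite (wheel_V n)" "{0..<n-1} \<subseteq> wheel_V n" "{n-1} \<union> {} \<subseteq> wheel_V n"
    "\<forall>x\<in>{0..<n-1}. x \<in> {} \<longrightarrow> pp x \<in> {n-1}" using assms unfolding wheel_V_def by auto
  show "\<forall>x\<in>{0..<n-1}. pp x \<in> {0..<n-1} \<and> pp x \<noteq> x \<and> pp (pp x) = x" using pp_props m by auto
  show "\<forall>M'. {n-1} \<subseteq> M' \<longrightarrow> M' \<subseteq> wheel_V n \<longrightarrow> (\<forall>x\<in>{0..<n-1}. x \<in> M' \<or> pp x \<in> M') \<longrightarrow>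
      resolving (wheel_adj n) (wheel_V n) M'"
    using res_general[of n m] m assms(1) by auto
qed




lemma outcome_M: "maker_wins V W {} {} True \<Longrightarrow> maker_wins V W {} {} False \<Longrightarrow> game_outcome V W = Maker_outcome"
  unfolding game_outcome_def by simp

lemma outcome_B: "\<not> maker_wins V W {} {} True \<Longrightarrow> \<not> maker_wins V W {} {} False \<Longrightarrow> game_outcome V W = Breaker_outcome"
  unfolding game_outcome_def by simp

lemma outcome_MN: "maker_wins V W {} {} True \<Longrightarrow> game_outcome V W \<in> {Maker_outcome, Next_outcome}"
  unfolding game_outcome_def Let_def by simp

lemma Rk_eq: "n \<ge> 3 \<Longrightarrow> k \<ge> 1 \<Longrightarrow> O_Rk k (wheel_adj n) (wheel_V n) = O_R (wheel_adj n) (wheel_V n)"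
  unfolding O_Rk_def O_R_def by (rule outcome_cong) (simp add: kres_iff)

abbreviation "WW n \<equiv> resolving (wheel_adj n) (wheel_V n)"

lemma first_from: "v \<in> wheel_V n \<Longrightarrow> maker_wins (wheel_V n) (WW n) {v} {} False \<Longrightarrow> maker_wins (wheel_V n) (WW n) {} {} True"
  by (rule maker_wins.maker_move[of v]) auto

lemma win_even: "n \<ge> 6 \<Longrightarrow> even n \<Longrightarrow> O_R (wheel_adj n) (wheel_V n) = Maker_outcome"
  unfolding O_R_def
  apply (rule outcome_M)
   apply (rule first_from[of n]) apply (simp add: wheel_V_def) apply (rule even_win) apply (auto simp: wheel_V_def)[3]
  apply (rule even_win) apply (auto simp: wheel_V_def)
  done

lemma win_odd: "n \<ge> 7 \<Longrightarrow> odd n \<Longrightarrow> maker_wins (wheel_V n) (WW n) {} {} True"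
proof (rule first_from[of "n-1"])
  assume "n \<ge> 7" "odd n"
  then show "n - 1 \<in> wheel_V n" unfolding wheel_V_def by auto
  show "maker_wins (wheel_V n) (WW n) {n - 1} {} False" by (rule odd_win) fact+
qed

lemma win4: "O_R (wheel_adj 4) (wheel_V 4) = Maker_outcome"
  unfolding O_R_def
  apply (rule outcome_M)
   apply (rule first_from[of 4]) apply (simp add: wheel_V_def) apply (rule win_pairs) using c4 apply auto[2]
  apply (rule win_pairs) using c4 apply auto
  done

lemma win5: "O_R (wheel_adj 5) (wheel_V 5) = Maker_outcome"
  unfolding O_R_def
  apply (rule outcome_M)
   apply (rule first_from[of 0]) apply (simp add: wheel_V_def) apply (rule win_pairs) using c5 apply auto[2]
  apply (rule win_pairs) using c5 apply auto
  done

lemma win7: "O_R (wheel_adj 7) (wheel_V 7) = Maker_outcome"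
  unfolding O_R_def
proof (rule outcome_M)
  show "maker_wins (wheel_V 7) (WW 7) {} {} True" by (rule win_odd) auto
  show "maker_wins (wheel_V 7) (WW 7) {} {} False"
  proof (rule maker_wins.breaker_move)
    show "{} \<union> {} \<noteq> wheel_V 7" unfolding wheel_V_def by auto
    show "\<forall>v\<in>wheel_V 7 - ({} \<union> {}). maker_wins (wheel_V 7) (WW 7) {} (insert v {}) True"
    proof
      fix v assume v: "v \<in> wheel_V 7 - ({} \<union> {})"
      then have vs: "v \<in> set [0..<8]" unfolding wheel_V_def by auto
      then have cv: "resp7 v \<noteq> v" "resp7 v \<le> 7" "cond 7 {resp7 v} {v} (ps7 v)" using c7 by blast+
      show "maker_wins (wheel_V 7) (WW 7) {} (insert v {}) True"
      proof (rule maker_wins.maker_move[of "resp7 v"])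
        show "resp7 v \<in> wheel_V 7 - ({} \<union> insert v {})" using cv unfolding wheel_V_def by auto
        show "maker_wins (wheel_V 7) (WW 7) (insert (resp7 v) {}) (insert v {}) False"
          using win_pairs[OF _ cv(3)] by simp
      qed
    qed
  qed
qed

theorem corollary3p8:
  fixes k n :: nat
  assumes "k \<ge> 1" and "n \<ge> 3"
  shows "(n = 3 \<longrightarrow>
            O_Rk k (wheel_adj n) (wheel_V n) = Breaker_outcome \<and>
            O_R (wheel_adj n) (wheel_V n) = Breaker_outcome)
       \<and> ((n \<in> {4,5,6,7} \<or> (n \<ge> 8 \<and> even n)) \<longrightarrow>
            O_Rk k (wheel_adj n) (wheel_V n) = Maker_outcome \<and>
            O_R (wheel_adj n) (wheel_V n) = Maker_outcome)
       \<and> ((n \<ge> 9 \<and> odd n) \<longrightarrow>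
            O_Rk k (wheel_adj n) (wheel_V n) = O_R (wheel_adj n) (wheel_V n) \<and>
            O_R (wheel_adj n) (wheel_V n) \<in> {Maker_outcome, Next_outcome})"
proof -
  have eq: "O_Rk k (wheel_adj n) (wheel_V n) = O_R (wheel_adj n) (wheel_V n)"
    using Rk_eq assms by blast
  have p1: "n = 3 \<longrightarrow> O_R (wheel_adj n) (wheel_V n) = Breaker_outcome"
    unfolding O_R_def using outcome_B lose3 by blast
  have p2: "(n \<in> {4,5,6,7} \<or> (n \<ge> 8 \<and> even n)) \<longrightarrow> O_R (wheel_adj n) (wheel_V n) = Maker_outcome"
    using win4 win5 win7 win_even[of 6] win_even[of n] by auto
  have p3: "(n \<ge> 9 \<and> odd n) \<longrightarrow> O_R (wheel_adj n) (wheel_V n) \<in> {Maker_outcome, Next_outcome}"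
  proof
    assume "n \<ge> 9 \<and> odd n"
    then have "maker_wins (wheel_V n) (WW n) {} {} True" using win_odd by auto
    then show "O_R (wheel_adj n) (wheel_V n) \<in> {Maker_outcome, Next_outcome}"
      unfolding O_R_def by (rule outcome_MN)
  qed
  show ?thesis unfolding eq using p1 p2 p3 by blast
qed


end
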